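(* If $\mathcal M$ is a uniform oriented matroid with $\operatorname{rank}(\mathcal M)\ge 4$ and $\operatorname{corank}(\mathcal M)\ge 2$, then $\mathcal M$ has a minor isomorphic to the alternating oriented matroid $C^{6,4}$.
   Context: An oriented matroid of rank $d$ on $E$ (given by signed circuits) is uniform if the supports of its circuits are exactly all $(d+1)$-element subsets of $E$; corank is $|E|-\operatorname{rank}$. Minors are obtained by sequences of deletions and contractions of elements. $C^{n,d}$ on $[n]$ has as circuits the signed sets $(I^{odd},I^{even})$ and $(I^{even},I^{odd})$ for $(d+1)$-subsets $I=\{i_1<\dots<i_{d+1}\}$, with $I^{odd}=\{i_1,i_3,\dots\}$, $I^{even}=\{i_2,i_4,\dots\}$. Isomorphism: reorientation of a subset of elements followed by bijective relabeling. *)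

theory Defs
  imports Main
begin

text \<open>Signed sets are pairs (positive part, negative part).\<close>
type_synonym 'a signed = "'a set \<times> 'a set"

definition supp :: "'a signed \<Rightarrow> 'a set" where
  "supp X = fst X \<union> snd X"

definition neg :: "'a signed \<Rightarrow> 'a signed" where
  "neg X = (snd X, fst X)"

definition oriented_matroid :: "'a set \<Rightarrow> 'a signed set \<Rightarrow> bool" where
  "oriented_matroid E C \<longleftrightarrow>
     finite E \<and>
     (\<forall>X\<in>C. fst X \<inter> snd X = {} \<and> supp X \<subseteq> E) \<and>
     ({}, {}) \<notin> C \<and>
     (\<forall>X\<in>C. neg X \<in> C) \<and>
     (\<forall>X\<in>C. \<forall>Y\<in>C. supp X \<subseteq> supp Y \<longrightarrow> X = Y \<or> X = neg Y) \<and>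
     (\<forall>X\<in>C. \<forall>Y\<in>C. \<forall>e. X \<noteq> neg Y \<and> e \<in> fst X \<inter> snd Y \<longrightarrow>
        (\<exists>Z\<in>C. fst Z \<subseteq> (fst X \<union> fst Y) - {e} \<and> snd Z \<subseteq> (snd X \<union> snd Y) - {e}))"

definition uniform_OM :: "'a set \<Rightarrow> 'a signed set \<Rightarrow> nat \<Rightarrow> bool" where
  "uniform_OM E C d \<longleftrightarrow> oriented_matroid E C \<and> d \<le> card E \<and>
     supp ` C = {I. I \<subseteq> E \<and> card I = d + 1}"

definition deletion :: "'a set \<times> 'a signed set \<Rightarrow> 'a \<Rightarrow> 'a set \<times> 'a signed set" where
  "deletion M e = (fst M - {e}, {X \<in> snd M. e \<notin> supp X})"

definition contraction :: "'a set \<times> 'a signed set \<Rightarrow> 'a \<Rightarrow> 'a set \<times> 'a signed set" where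
  "contraction M e =
     (let D = (\<lambda>X. (fst X - {e}, snd X - {e})) ` snd M - {({}, {})}
      in (fst M - {e}, {X \<in> D. \<forall>Y\<in>D. supp Y \<subseteq> supp X \<longrightarrow> supp Y = supp X}))"

inductive minor :: "'a set \<times> 'a signed set \<Rightarrow> 'a set \<times> 'a signed set \<Rightarrow> bool" where
  minor_refl: "minor M M"
| minor_del: "minor N M \<Longrightarrow> e \<in> fst N \<Longrightarrow> minor (deletion N e) M"
| minor_con: "minor N M \<Longrightarrow> e \<in> fst N \<Longrightarrow> minor (contraction N e) M"

definition reorient :: "'a set \<Rightarrow> 'a signed \<Rightarrow> 'a signed" where
  "reorient A X = ((fst X - A) \<union> (snd X \<inter> A), (snd X - A) \<union> (fst X \<inter> A))"

definition relabel :: "('a \<Rightarrow> 'b) \<Rightarrow> 'a signed \<Rightarrow> 'b signed" where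
  "relabel f X = (f ` fst X, f ` snd X)"

definition om_iso :: "'a set \<times> 'a signed set \<Rightarrow> 'b set \<times> 'b signed set \<Rightarrow> bool" where
  "om_iso M M' \<longleftrightarrow> (\<exists>A f. A \<subseteq> fst M \<and> bij_betw f (fst M) (fst M') \<and>
      snd M' = (\<lambda>X. relabel f (reorient A X)) ` snd M)"

text \<open>Elements of I in odd / even position (1-indexed) in increasing order.\<close>
definition odd_part :: "nat set \<Rightarrow> nat set" where
  "odd_part I = {i \<in> I. even (card {j \<in> I. j < i})}"

definition even_part :: "nat set \<Rightarrow> nat set" where
  "even_part I = {i \<in> I. odd (card {j \<in> I. j < i})}"

definition alt_circuits :: "nat \<Rightarrow> nat \<Rightarrow> nat signed set" where
  "alt_circuits n d =
     (\<Union>I\<in>{I. I \<subseteq> {1..n} \<and> card I = d + 1}.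
        {(odd_part I, even_part I), (even_part I, odd_part I)})"

definition alternating_OM :: "nat \<Rightarrow> nat \<Rightarrow> nat set \<times> nat signed set" where
  "alternating_OM n d = ({1..n}, alt_circuits n d)"

end

theory Submission
  imports Defs
begin

definition sv :: "'a signed \<Rightarrow> 'a \<Rightarrow> int" where
  "sv Y j = (if j \<in> fst Y then 1 else if j \<in> snd Y then -1 else 0)"

lemma sv_neg: "fst Y \<inter> snd Y = {} \<Longrightarrow> sv (neg Y) j = - sv Y j"
  unfolding sv_def neg_def by auto

lemma sv_eq: assumes "fst Y \<inter> snd Y = {}" "fst Y' \<inter> snd Y' = {}" "\<And>j. sv Y j = sv Y' j"
  shows "Y = Y'"
proof -
  have "fst Y = fst Y'"
  proof
    show "fst Y \<subseteq> fst Y'" using assms(3) unfolding sv_def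
      by (metis (full_types) equals0D subsetI one_neq_neg_one one_neq_zero)
    show "fst Y' \<subseteq> fst Y" using assms(3) unfolding sv_def
      by (metis (full_types) equals0D subsetI one_neq_neg_one one_neq_zero)
  qed
  moreover have "snd Y = snd Y'"
  proof
    show "snd Y \<subseteq> snd Y'" using assms unfolding sv_def
      by (smt (verit) disjoint_iff subsetI)
    show "snd Y' \<subseteq> snd Y" using assms unfolding sv_def
      by (smt (verit) disjoint_iff subsetI)
  qed
  ultimately show ?thesis by (simp add: prod_eq_iff)
qed

lemma sv_cases: "sv Y j = 1 \<or> sv Y j = -1 \<or> sv Y j = 0"
  unfolding sv_def by auto

lemma sv_supp: "sv Y j = 0 \<longleftrightarrow> j \<notin> supp Y"
  unfolding sv_def supp_def by auto


lemma sv_one: "sv Y j = 1 \<longleftrightarrow> j \<in> fst Y" unfolding sv_def by auto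
lemma sv_mone: "fst Y \<inter> snd Y = {} \<Longrightarrow> sv Y j = -1 \<longleftrightarrow> j \<in> snd Y" unfolding sv_def by auto
lemma supp_neg: "supp (neg Y) = supp Y" unfolding supp_def neg_def by auto
lemma fst_neg: "fst (neg Y) = snd Y" and snd_neg: "snd (neg Y) = fst Y" unfolding neg_def by auto
abbreviation (input) pm :: "int \<Rightarrow> bool" where "pm a \<equiv> a = 1 \<or> a = -1"
lemma ar_star: "pm t \<Longrightarrow> pm a \<Longrightarrow> pm b \<Longrightarrow> pm c \<Longrightarrow> pm d \<Longrightarrow> pm e \<Longrightarrow> pm g \<Longrightarrow>
  t * a = - e * g \<Longrightarrow> t * b = c * d \<Longrightarrow> a * b * c * d * e * g = -1"
  by auto
lemma ar_anti: "pm a \<Longrightarrow> pm b \<Longrightarrow> pm c \<Longrightarrow> pm d \<Longrightarrow> pm e \<Longrightarrow> pm g \<Longrightarrow>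
  a*b*c*d*e*g = -1 \<Longrightarrow> a*b*(-a*c)*d = -(b*a*(-b*e)*g)"
  by auto
lemma ar_T1: "pm q \<Longrightarrow> pm d \<Longrightarrow> pm m \<Longrightarrow> pm n \<Longrightarrow> q*d*(-q*m)*n = 1 \<Longrightarrow> n = -m*d"
  by auto
lemma ar_T2: "pm a \<Longrightarrow> pm q \<Longrightarrow> pm u \<Longrightarrow> pm v \<Longrightarrow> pm m \<Longrightarrow> pm w \<Longrightarrow>
   a*q*u*v*m*w = -1 \<Longrightarrow> a*q*(-a*u)*v = 1 \<Longrightarrow> w = a*m"
  by auto
lemma ar_T3: "pm a \<Longrightarrow> pm d \<Longrightarrow> pm m \<Longrightarrow> n = -m*d \<Longrightarrow> w = a*m \<Longrightarrow> a*d = -w*n"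
  by auto
lemma ar_T5: "pm t \<Longrightarrow> pm z \<Longrightarrow> pm a \<Longrightarrow> pm d \<Longrightarrow> pm q \<Longrightarrow> pm u \<Longrightarrow> pm v \<Longrightarrow>
   t*z = a*d \<Longrightarrow> t*v = a*q \<Longrightarrow> a*q*(-a*u)*v = 1 \<Longrightarrow> a*d*(-a*u)*z = 1"
  by auto

definition par :: "nat \<Rightarrow> int" where "par n = (if even n then 1 else -1)"
definition alt :: "nat \<Rightarrow> nat \<Rightarrow> int" where "alt a b = (if odd b = (b < a) then 1 else -1)"
definition Alt :: "nat \<Rightarrow> nat signed" where
  "Alt a = (odd_part ({1..6} - {a}), even_part ({1..6} - {a}))"

lemma par_pm: "pm (par n)" unfolding par_def by auto

lemma par_alt: "a \<noteq> b \<Longrightarrow> par b * (if a < b then 1 else -1) = alt a b"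
  unfolding par_def alt_def by auto

lemma card_below:
  assumes "a \<in> {1..n}" "i \<in> {1..n}"
  shows "card {j \<in> {1..n} - {a}. j < i} = (i - 1) - (if a < i then 1 else 0)"
proof -
  have "{j \<in> {1..n} - {a}. j < i} = {1..<i} - {a}" using assms by auto
  moreover have "card ({1..<i} - {a}) = card {1..<i} - (if a \<in> {1..<i} then 1 else 0)"
    by (simp add: card_Diff_singleton_if)
  ultimately show ?thesis using assms by auto
qed

lemma odd_part_char:
  assumes "a \<in> {1..6}" "i \<in> {1..6}" "i \<noteq> a"
  shows "i \<in> odd_part ({1..6} - {a}) \<longleftrightarrow> odd i = (i < a)"
    and "i \<in> even_part ({1..6} - {a}) \<longleftrightarrow> \<not> (odd i = (i < a))"
proof -
  have c: "card {j \<in> {1..6} - {a}. j < i} = (i - 1) - (if a < i then 1 else 0)"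
    using card_below[OF assms(1,2)] by simp
  have i1: "i \<ge> 1" using assms by auto
  have e: "even ((i - 1) - (if a < i then 1 else 0)) \<longleftrightarrow> odd i = (i < a)"
  proof (cases "a < i")
    case True
    then have "i \<ge> 2" using assms by auto
    then show ?thesis using True by (auto simp: even_diff_nat)
  next
    case False
    then show ?thesis using i1 assms(3) by (auto simp: even_diff_nat)
  qed
  show "i \<in> odd_part ({1..6} - {a}) \<longleftrightarrow> odd i = (i < a)"
    unfolding odd_part_def using c e assms by auto
  show "i \<in> even_part ({1..6} - {a}) \<longleftrightarrow> \<not> (odd i = (i < a))"
    unfolding even_part_def using c e assms by auto
qed

lemma sv_Alt: assumes "a \<in> {1..6}"
  shows "sv (Alt a) b = (if b \<in> {1..6} \<and> b \<noteq> a then alt a b else 0)"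
proof (cases "b \<in> {1..6} \<and> b \<noteq> a")
  case True
  then show ?thesis using odd_part_char[OF assms, of b] unfolding sv_def Alt_def alt_def by auto
next
  case False
  then have "b \<notin> odd_part ({1..6} - {a})" "b \<notin> even_part ({1..6} - {a})"
    unfolding odd_part_def even_part_def by auto
  then show ?thesis using False unfolding sv_def Alt_def by auto
qed

lemma disj_Alt: "fst (Alt a) \<inter> snd (Alt a) = {}"
  unfolding Alt_def odd_part_def even_part_def by auto

lemma five_subsets: "{I. I \<subseteq> {1..6::nat} \<and> card I = 5} = (\<lambda>a. {1..6} - {a}) ` {1..6}"
proof
  show "{I. I \<subseteq> {1..6::nat} \<and> card I = 5} \<subseteq> (\<lambda>a. {1..6} - {a}) ` {1..6}"
  proof
    fix I assume "I \<in> {I. I \<subseteq> {1..6::nat} \<and> card I = 5}"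
    then have I: "I \<subseteq> {1..6}" "card I = 5" by auto
    then have "card ({1..6} - I) = 1" by (simp add: card_Diff_subset finite_subset)
    then obtain a where a: "{1..6} - I = {a}" using card_1_singletonE by blast
    then have "a \<in> {1..6}" "I = {1..6} - {a}" using I(1) by auto
    then show "I \<in> (\<lambda>a. {1..6} - {a}) ` {1..6}" by blast
  qed
  show "(\<lambda>a. {1..6} - {a}) ` {1..6} \<subseteq> {I. I \<subseteq> {1..6::nat} \<and> card I = 5}"
    by auto
qed

lemma alt_circ: "alt_circuits 6 4 = (\<Union>a\<in>{1..6}. {Alt a, neg (Alt a)})"
proof -
  have eq: "{I. I \<subseteq> {1..6::nat} \<and> card I = 4 + 1} = (\<lambda>a. {1..6} - {a}) ` {1..6}"
    using five_subsets by simp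
  show ?thesis unfolding alt_circuits_def eq by (simp add: Alt_def neg_def image_image)
qed

lemma sv_reorient: "fst Y \<inter> snd Y = {} \<Longrightarrow> sv (reorient A Y) j = (if j \<in> A then -1 else 1) * sv Y j"
  unfolding reorient_def sv_def by auto

lemma disj_reorient: "fst Y \<inter> snd Y = {} \<Longrightarrow> fst (reorient A Y) \<inter> snd (reorient A Y) = {}"
  unfolding reorient_def by auto

lemma supp_reorient: "supp (reorient A Y) = supp Y"
  unfolding reorient_def supp_def by auto

lemma sv_relabel1: "inj_on f S \<Longrightarrow> supp Y \<subseteq> S \<Longrightarrow> j \<in> S \<Longrightarrow> sv (relabel f Y) (f j) = sv Y j"
  unfolding relabel_def sv_def supp_def inj_on_def by auto

lemma sv_relabel0: "supp Y \<subseteq> S \<Longrightarrow> b \<notin> f ` S \<Longrightarrow> sv (relabel f Y) b = 0"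
  unfolding relabel_def sv_def supp_def by auto

lemma disj_relabel: assumes "inj_on f S" "supp Y \<subseteq> S" "fst Y \<inter> snd Y = {}"
  shows "fst (relabel f Y) \<inter> snd (relabel f Y) = {}"
proof -
  have "False" if "a \<in> fst Y" "b \<in> snd Y" "f a = f b" for a b
  proof -
    have "a \<in> S" "b \<in> S" using that assms(2) unfolding supp_def by auto
    then have "a = b" using assms(1) that(3) unfolding inj_on_def by blast
    then show False using that assms(3) by auto
  qed
  then show ?thesis unfolding relabel_def by auto
qed

lemma reorient_neg: "reorient A (neg Y) = neg (reorient A Y)"
  unfolding reorient_def neg_def by auto

lemma relabel_neg: "relabel f (neg Y) = neg (relabel f Y)"
  unfolding relabel_def neg_def by auto

lemma ar_key: "pm rj \<Longrightarrow> pm rk \<Longrightarrow> pm sk \<Longrightarrow> rj * P * (rk * rj * sk * C) = (sk * rk) * (P * C)"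
  by auto

locale six =
  fixes V :: "'a set" and NC :: "'a signed set"
  assumes fin: "finite V" and card6: "card V = 6"
  and disj: "\<forall>Y\<in>NC. fst Y \<inter> snd Y = {}"
  and suppV: "\<forall>Y\<in>NC. supp Y \<subseteq> V \<and> card (supp Y) = 5"
  and ex: "\<forall>S. S \<subseteq> V \<and> card S = 5 \<longrightarrow> (\<exists>Y\<in>NC. supp Y = S)"
  and uniq: "\<forall>Y\<in>NC. \<forall>Y'\<in>NC. supp Y = supp Y' \<longrightarrow> Y' = Y \<or> Y' = neg Y"
  and negc: "\<forall>Y\<in>NC. neg Y \<in> NC"
  and elim: "\<forall>Y\<in>NC. \<forall>Y'\<in>NC. \<forall>e. supp Y \<noteq> supp Y' \<and> e \<in> fst Y \<inter> snd Y' \<longrightarrow>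
     (\<exists>Z\<in>NC. fst Z \<subseteq> fst Y \<union> fst Y' - {e} \<and> snd Z \<subseteq> snd Y \<union> snd Y' - {e})"
begin

definition XX :: "'a \<Rightarrow> 'a signed" where
  "XX k = (SOME Y. Y \<in> NC \<and> supp Y = V - {k})"

definition x :: "'a \<Rightarrow> 'a \<Rightarrow> int" where
  "x k j = sv (XX k) j"

lemma XX: assumes "k \<in> V" shows "XX k \<in> NC \<and> supp (XX k) = V - {k}"
proof -
  have "card (V - {k}) = 5" using assms fin card6 by simp
  then obtain Y where "Y \<in> NC" "supp Y = V - {k}" using ex by blast
  then show ?thesis unfolding XX_def using someI[of "\<lambda>Y. Y \<in> NC \<and> supp Y = V - {k}" Y] by auto
qed

lemma NC_cases: assumes "Y \<in> NC" shows "\<exists>k\<in>V. Y = XX k \<or> Y = neg (XX k)"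
proof -
  have s: "supp Y \<subseteq> V" "card (supp Y) = 5" using suppV assms by auto
  have "card (V - supp Y) = 1" using s fin card6 by (simp add: card_Diff_subset finite_subset)
  then obtain k where k: "V - supp Y = {k}" using card_1_singletonE by blast
  then have kV: "k \<in> V" and sY: "supp Y = V - {k}" using s by auto
  have "Y = XX k \<or> Y = neg (XX k)" using uniq XX[OF kV] assms sY by metis
  then show ?thesis using kV by blast
qed

lemma x_pm: "k \<in> V \<Longrightarrow> j \<in> V \<Longrightarrow> j \<noteq> k \<Longrightarrow> x k j = 1 \<or> x k j = -1"
  using XX[of k] sv_cases[of "XX k" j] sv_supp[of "XX k" j] unfolding x_def by auto

lemma x_zero: "k \<in> V \<Longrightarrow> x k k = 0"
  using XX[of k] sv_supp[of "XX k" k] unfolding x_def by auto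

lemma disjXX: "k \<in> V \<Longrightarrow> fst (XX k) \<inter> snd (XX k) = {}"
  using XX disj by blast

lemma signed_choice:
  assumes "k \<in> V" "\<epsilon> = 1 \<or> \<epsilon> = -1"
  shows "\<exists>Y\<in>NC. supp Y = V - {k} \<and> fst Y \<inter> snd Y = {} \<and> (\<forall>j. sv Y j = \<epsilon> * x k j)"
proof (cases "\<epsilon> = 1")
  case True
  then show ?thesis using XX[OF assms(1)] disjXX[OF assms(1)] unfolding x_def by auto
next
  case False
  then have e: "\<epsilon> = -1" using assms by auto
  have "neg (XX k) \<in> NC" using negc XX[OF assms(1)] by blast
  moreover have "fst (neg (XX k)) \<inter> snd (neg (XX k)) = {}" using disjXX[OF assms(1)]
    by (auto simp: fst_neg snd_neg)
  ultimately show ?thesis using XX[OF assms(1)] sv_neg[OF disjXX[OF assms(1)]] e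
    unfolding x_def by (intro bexI[of _ "neg (XX k)"]) (auto simp: supp_neg)
qed

lemma conf:
  assumes kV: "k \<in> V" and lV: "l \<in> V" and fV: "f \<in> V" and d: "k \<noteq> l" "k \<noteq> f" "l \<noteq> f"
  shows "\<exists>\<tau>. (\<tau> = 1 \<or> \<tau> = -1) \<and> \<tau> * x f k = -(x l f) * x l k \<and> \<tau> * x f l = x k f * x k l \<and>
     (\<forall>j\<in>V. j \<noteq> k \<longrightarrow> j \<noteq> l \<longrightarrow> j \<noteq> f \<longrightarrow> x k f * x k j = -(x l f) * x l j \<longrightarrow>
        \<tau> * x f j = x k f * x k j)"
proof -
  have pkf: "x k f = 1 \<or> x k f = -1" using x_pm kV fV d by auto
  have plf: "x l f = 1 \<or> x l f = -1" using x_pm lV fV d by auto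
  obtain Y where Y: "Y \<in> NC" "supp Y = V - {k}" "fst Y \<inter> snd Y = {}" "\<And>j. sv Y j = x k f * x k j"
    using signed_choice[OF kV pkf] by blast
  obtain Y' where Y': "Y' \<in> NC" "supp Y' = V - {l}" "fst Y' \<inter> snd Y' = {}" "\<And>j. sv Y' j = -(x l f) * x l j"
    using signed_choice[OF lV, of "-(x l f)"] plf by auto
  have "x k f * x k f = 1" using pkf by auto
  then have "sv Y f = 1" by (simp add: Y(4))
  then have f1: "f \<in> fst Y" using sv_one[of Y f] by simp
  have "-(x l f) * x l f = -1" using plf by auto
  then have "sv Y' f = -1" by (simp add: Y'(4))
  then have f2: "f \<in> snd Y'" using sv_mone[OF Y'(3), of f] by simp
  have "supp Y \<noteq> supp Y'" using Y(2) Y'(2) kV lV d by auto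
  then obtain Z where Z: "Z \<in> NC" "fst Z \<subseteq> fst Y \<union> fst Y' - {f}" "snd Z \<subseteq> snd Y \<union> snd Y' - {f}"
    using elim[rule_format, OF Y(1) Y'(1), of f] f1 f2 by auto
  have "supp Z \<subseteq> V - {f}" using Z Y(2) Y'(2) unfolding supp_def by auto
  moreover have "card (supp Z) = card (V - {f})" using suppV Z(1) fin card6 fV by simp
  ultimately have sZ: "supp Z = V - {f}" using fin by (metis card_subset_eq finite_Diff)
  have "Z = XX f \<or> Z = neg (XX f)" using uniq XX[OF fV] Z(1) sZ by metis
  then obtain \<tau> where tau: "\<tau> = 1 \<or> \<tau> = -1" "\<And>j. sv Z j = \<tau> * x f j"
  proof
    assume "Z = XX f" then show ?thesis using that[of 1] unfolding x_def by simp
  next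
    assume "Z = neg (XX f)" then show ?thesis using that[of "-1"] sv_neg[OF disjXX[OF fV]] unfolding x_def by simp
  qed
  have dZ: "fst Z \<inter> snd Z = {}" using disj Z(1) by blast
  have c1: "sv Y j = 1 \<or> sv Y' j = 1" if "sv Z j = 1" for j
  proof -
    have "j \<in> fst Z" using that sv_one[of Z j] by simp
    then have "j \<in> fst Y \<or> j \<in> fst Y'" using Z(2) by auto
    then show ?thesis using sv_one[of Y j] sv_one[of Y' j] by auto
  qed
  have c2: "sv Y j = -1 \<or> sv Y' j = -1" if "sv Z j = -1" for j
  proof -
    have "j \<in> snd Z" using that sv_mone[OF dZ] by simp
    then have "j \<in> snd Y \<or> j \<in> snd Y'" using Z(3) by auto
    then show ?thesis using sv_mone[OF Y(3)] sv_mone[OF Y'(3)] by auto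
  qed
  have nz: "sv Z j = 1 \<or> sv Z j = -1" if "j \<in> V" "j \<noteq> f" for j
  proof -
    have "sv Z j \<noteq> 0" using sv_supp[of Z j] sZ that by auto
    then show ?thesis using sv_cases[of Z j] by auto
  qed
  have yk: "sv Y k = 0" using sv_supp[of Y k] Y(2) by simp
  have yl: "sv Y' l = 0" using sv_supp[of Y' l] Y'(2) by simp
  have zk: "sv Z k = sv Y' k"
  proof -
    have "sv Z k = 1 \<or> sv Z k = -1" using nz[OF kV] d by auto
    then show ?thesis using c1[of k] c2[of k] yk by auto
  qed
  have zl: "sv Z l = sv Y l"
  proof -
    have "sv Z l = 1 \<or> sv Z l = -1" using nz[OF lV] d by auto
    then show ?thesis using c1[of l] c2[of l] yl by auto
  qed
  have zj: "\<forall>j\<in>V. j \<noteq> k \<longrightarrow> j \<noteq> l \<longrightarrow> j \<noteq> f \<longrightarrow> sv Y j = sv Y' j \<longrightarrow> sv Z j = sv Y j"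
  proof (intro ballI impI)
    fix j assume "j \<in> V" "j \<noteq> k" "j \<noteq> l" "j \<noteq> f" "sv Y j = sv Y' j"
    moreover have "sv Z j = 1 \<or> sv Z j = -1" using nz \<open>j \<in> V\<close> \<open>j \<noteq> f\<close> by auto
    ultimately show "sv Z j = sv Y j" using c1[of j] c2[of j] by auto
  qed
  show ?thesis
  proof (intro exI conjI)
    show "\<tau> = 1 \<or> \<tau> = -1" by (rule tau(1))
    show "\<tau> * x f k = -(x l f) * x l k" using zk tau(2) Y'(4) by simp
    show "\<tau> * x f l = x k f * x k l" using zl tau(2) Y(4) by simp
    show "\<forall>j\<in>V. j \<noteq> k \<longrightarrow> j \<noteq> l \<longrightarrow> j \<noteq> f \<longrightarrow> x k f * x k j = -(x l f) * x l j \<longrightarrow>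
        \<tau> * x f j = x k f * x k j" using zj tau(2) Y(4) Y'(4) by simp
  qed
qed

lemma star:
  assumes kV: "k \<in> V" and lV: "l \<in> V" and fV: "f \<in> V" and d: "k \<noteq> l" "k \<noteq> f" "l \<noteq> f"
  shows "x f k * x f l * x k f * x k l * x l f * x l k = -1"
proof -
  obtain \<tau> where t: "\<tau> = 1 \<or> \<tau> = -1" "\<tau> * x f k = -(x l f) * x l k" "\<tau> * x f l = x k f * x k l"
    using conf[OF kV lV fV d] by blast
  show ?thesis
    by (rule ar_star[OF t(1) x_pm[OF fV kV] x_pm[OF fV lV] x_pm[OF kV fV] x_pm[OF kV lV] x_pm[OF lV fV] x_pm[OF lV kV] t(2) t(3)])
      (use d in auto)
qed

definition p0 :: 'a where "p0 = (SOME p. p \<in> V)"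

lemma p0V: "p0 \<in> V"
proof -
  have "V \<noteq> {}" using card6 by auto
  then show ?thesis unfolding p0_def by (simp add: some_in_eq)
qed

definition s :: "'a \<Rightarrow> int" where "s j = (if j = p0 then 1 else - x p0 j * x j p0)"
definition r :: "'a \<Rightarrow> int" where "r j = (if j = p0 then 1 else x p0 j)"
definition c' :: "'a \<Rightarrow> 'a \<Rightarrow> int" where "c' k j = r k * r j * s k * x k j"

lemma s_pm: "j \<in> V \<Longrightarrow> s j = 1 \<or> s j = -1"
  using x_pm[of p0 j] x_pm[of j p0] p0V unfolding s_def by (cases "j = p0") auto

lemma r_pm: "j \<in> V \<Longrightarrow> r j = 1 \<or> r j = -1"
  using x_pm[of p0 j] p0V unfolding r_def by (cases "j = p0") auto

lemma c'_pm: "k \<in> V \<Longrightarrow> j \<in> V \<Longrightarrow> k \<noteq> j \<Longrightarrow> c' k j = 1 \<or> c' k j = -1"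
  using r_pm[of k] r_pm[of j] s_pm[of k] x_pm[of k j] unfolding c'_def by auto

lemma c'_self: "k \<in> V \<Longrightarrow> c' k k = 0"
  using x_zero unfolding c'_def by simp

lemma x_from_c': "k \<in> V \<Longrightarrow> j \<in> V \<Longrightarrow> k \<noteq> j \<Longrightarrow> x k j = r k * r j * s k * c' k j"
  using r_pm[of k] r_pm[of j] s_pm[of k] x_pm[of k j] unfolding c'_def by auto

lemma c'_p: "j \<in> V \<Longrightarrow> j \<noteq> p0 \<Longrightarrow> c' p0 j = 1"
  using x_pm[of p0 j] p0V unfolding c'_def r_def s_def by auto

lemma c'_anti: assumes "k \<in> V" "j \<in> V" "k \<noteq> j" shows "c' k j = - c' j k"
proof (cases "k = p0")
  case True
  then show ?thesis using assms x_pm[of p0 j] x_pm[of j p0] unfolding c'_def r_def s_def by auto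
next
  case kp: False
  show ?thesis
  proof (cases "j = p0")
    case True
    then show ?thesis using assms x_pm[of p0 k] x_pm[of k p0] unfolding c'_def r_def s_def by auto
  next
    case False
    have st: "x p0 k * x p0 j * x k p0 * x k j * x j p0 * x j k = -1"
      using star[of k j p0] assms p0V kp False by auto
    have ne: "k \<noteq> p0" "j \<noteq> p0" "p0 \<noteq> k" "p0 \<noteq> j" "k \<noteq> j" "j \<noteq> k" using kp False assms by auto
    have "x p0 k * x p0 j * (- x p0 k * x k p0) * x k j = -(x p0 j * x p0 k * (- x p0 j * x j p0) * x j k)"
      by (rule ar_anti[OF x_pm[OF p0V assms(1) ne(1)] x_pm[OF p0V assms(2) ne(2)] x_pm[OF assms(1) p0V ne(3)]
         x_pm[OF assms(1) assms(2) ne(6)] x_pm[OF assms(2) p0V ne(4)] x_pm[OF assms(2) assms(1) ne(5)] st])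
    then show ?thesis using kp False unfolding c'_def r_def s_def by simp
  qed
qed

lemma c'_trans:
  assumes bV: "b \<in> V" and cV: "cc \<in> V" and dV: "dd \<in> V" and nb: "b \<noteq> p0" and nc: "cc \<noteq> p0" and nd: "dd \<noteq> p0"
    and bc: "b \<noteq> cc" and cd: "cc \<noteq> dd" and bd: "b \<noteq> dd"
    and h1: "c' b cc = 1" and h2: "c' cc dd = 1"
  shows "c' b dd = 1"
proof -
  note pV = p0V
  have h1': "x p0 b * x p0 cc * (- x p0 b * x b p0) * x b cc = 1" using h1 nb nc unfolding c'_def r_def s_def by simp
  have h2': "x p0 cc * x p0 dd * (- x p0 cc * x cc p0) * x cc dd = 1" using h2 nd nc unfolding c'_def r_def s_def by simp
  have v: "pm (x p0 b)" "pm (x p0 cc)" "pm (x p0 dd)" "pm (x b p0)" "pm (x cc p0)"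
    "pm (x b cc)" "pm (x cc b)" "pm (x cc dd)" "pm (x b dd)"
    using x_pm[OF pV bV] x_pm[OF pV cV] x_pm[OF pV dV] x_pm[OF bV pV] x_pm[OF cV pV]
      x_pm[OF bV cV] x_pm[OF cV bV] x_pm[OF cV dV] x_pm[OF bV dV] nb nc nd bc cd bd by metis+
  have s1: "x cc dd = - x cc p0 * x p0 dd" using ar_T1[OF v(2) v(3) v(5) v(8) h2'] .
  have st: "x p0 b * x p0 cc * x b p0 * x b cc * x cc p0 * x cc b = -1"
    using star[of b cc p0] pV bV cV nb nc bc by auto
  have s2: "x cc b = x p0 b * x cc p0" using ar_T2[OF v(1) v(2) v(4) v(6) v(5) v(7) st h1'] .
  obtain \<tau> where t: "\<tau> = 1 \<or> \<tau> = -1" "\<tau> * x b cc = x p0 b * x p0 cc"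
     "\<forall>j\<in>V. j \<noteq> p0 \<longrightarrow> j \<noteq> cc \<longrightarrow> j \<noteq> b \<longrightarrow> x p0 b * x p0 j = -(x cc b) * x cc j \<longrightarrow>
        \<tau> * x b j = x p0 b * x p0 j"
    using conf[of p0 cc b] pV bV cV nb nc bc by auto
  have s3: "x p0 b * x p0 dd = -(x cc b) * x cc dd" using ar_T3[OF v(1) v(3) v(5) s1 s2] .
  have s4: "\<tau> * x b dd = x p0 b * x p0 dd" using t(3) dV nd cd bd s3 by simp
  have "x p0 b * x p0 dd * (- x p0 b * x b p0) * x b dd = 1"
    using ar_T5[OF t(1) v(9) v(1) v(3) v(2) v(4) v(6) s4 t(2) h1'] .
  then show ?thesis using nb nd unfolding c'_def r_def s_def by simp
qed

definition W :: "'a set" where "W = V - {p0}"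
definition pred :: "'a \<Rightarrow> 'a set" where "pred j = {i \<in> W. c' i j = 1}"
definition rk :: "'a \<Rightarrow> nat" where "rk j = card (pred j)"
definition lab :: "'a \<Rightarrow> nat" where "lab j = (if j = p0 then 1 else rk j + 2)"

lemma finW: "finite W" unfolding W_def using fin by simp
lemma cardW: "card W = 5" unfolding W_def using fin card6 p0V by simp
lemma WV: "W \<subseteq> V" unfolding W_def by auto

lemma pred_psub:
  assumes aW: "a \<in> W" and bW: "b \<in> W" and ab: "a \<noteq> b" and h: "c' a b = 1"
  shows "pred a \<subset> pred b"
proof -
  have aV: "a \<in> V" "a \<noteq> p0" and bV: "b \<in> V" "b \<noteq> p0" using aW bW unfolding W_def by auto
  have "pred a \<subseteq> pred b"
  proof
    fix i assume "i \<in> pred a"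
    then have iW: "i \<in> W" and ia: "c' i a = 1" unfolding pred_def by auto
    then have iV: "i \<in> V" "i \<noteq> p0" unfolding W_def by auto
    have "i \<noteq> a" using ia c'_self[OF aV(1)] by auto
    moreover have "i \<noteq> b"
    proof
      assume "i = b"
      then have "c' b a = 1" using ia by simp
      then show False using c'_anti[OF aV(1) bV(1) ab] h by simp
    qed
    ultimately have "c' i b = 1" using c'_trans[OF iV(1) aV(1) bV(1) iV(2) aV(2) bV(2) _ ab _ ia h] by auto
    then show "i \<in> pred b" using iW unfolding pred_def by auto
  qed
  moreover have "a \<in> pred b" using aW h unfolding pred_def by auto
  moreover have "a \<notin> pred a" using c'_self[OF aV(1)] unfolding pred_def by auto
  ultimately show ?thesis by blast
qed

lemma rk_lt: "a \<in> W \<Longrightarrow> b \<in> W \<Longrightarrow> a \<noteq> b \<Longrightarrow> c' a b = 1 \<Longrightarrow> rk a < rk b"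
  unfolding rk_def using pred_psub finW
  by (metis (no_types, lifting) mem_Collect_eq pred_def psubset_card_mono rev_finite_subset subsetI)

lemma tot: assumes "a \<in> W" "b \<in> W" "a \<noteq> b" shows "c' a b = 1 \<or> c' b a = 1"
proof -
  have "a \<in> V" "b \<in> V" using assms WV by auto
  then show ?thesis using c'_pm[of a b] c'_anti[of a b] assms(3) by auto
qed

lemma rk_inj: "inj_on rk W"
proof (rule inj_onI)
  fix a b assume "a \<in> W" "b \<in> W" "rk a = rk b"
  then show "a = b" using tot[of a b] rk_lt[of a b] rk_lt[of b a] by fastforce
qed

lemma rk_le: assumes "j \<in> W" shows "rk j \<le> 4"
proof -
  have "pred j \<subseteq> W - {j}" using c'_self[of j] assms WV unfolding pred_def by auto
  moreover have "card (W - {j}) = 4" using cardW finW assms by simp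
  ultimately show ?thesis unfolding rk_def using finW by (metis card_mono finite_Diff)
qed

lemma rk_img: "rk ` W = {0..4}"
proof -
  have "rk ` W \<subseteq> {0..4}" using rk_le by auto
  moreover have "card (rk ` W) = card {0..4::nat}" using card_image[OF rk_inj] cardW by simp
  ultimately show ?thesis by (metis card_subset_eq finite_atLeastAtMost)
qed

lemma lab_img: "lab ` V = {1..6}"
proof -
  have V: "V = insert p0 W" using p0V unfolding W_def by auto
  have "lab ` W = (\<lambda>n. n + 2) ` (rk ` W)" unfolding lab_def W_def by (auto simp: image_image)
  also have "\<dots> = {2..6}" unfolding rk_img by (subst image_add_atLeastAtMost') simp
  finally have lw: "lab ` W = {2..6}" .
  have "lab ` V = insert (lab p0) (lab ` W)" by (subst V) (rule image_insert)
  also have "\<dots> = insert 1 {2..6}" using lw unfolding lab_def by simp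
  also have "\<dots> = {1..6}" by auto
  finally show ?thesis .
qed

lemma lab_inj: "inj_on lab V"
proof (rule inj_onI)
  fix a b assume "a \<in> V" "b \<in> V" "lab a = lab b"
  then show "a = b" using rk_inj unfolding lab_def W_def inj_on_def by (auto split: if_splits)
qed

lemma lab_bij: "bij_betw lab V {1..6}"
  using lab_inj lab_img unfolding bij_betw_def by auto

lemma lab_ord: assumes "a \<in> V" "b \<in> V" "a \<noteq> b" shows "c' a b = (if lab a < lab b then 1 else -1)"
proof (cases "a = p0")
  case True
  then show ?thesis using c'_p assms unfolding lab_def by auto
next
  case ap: False
  show ?thesis
  proof (cases "b = p0")
    case True
    then show ?thesis using c'_p[of a] c'_anti[of a b] ap assms unfolding lab_def by auto
  next
    case False
    have aW: "a \<in> W" and bW: "b \<in> W" using ap False assms unfolding W_def by auto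
    show ?thesis
    proof (cases "c' a b = 1")
      case True
      then show ?thesis using rk_lt[OF aW bW assms(3)] ap False unfolding lab_def by auto
    next
      case nf: False
      then have "c' b a = 1" using tot[OF aW bW assms(3)] by auto
      then have "rk b < rk a" using rk_lt[OF bW aW] assms(3) by auto
      then show ?thesis using nf c'_pm[OF assms] ap False unfolding lab_def by auto
    qed
  qed
qed

definition ro :: "'a \<Rightarrow> int" where "ro j = r j * par (lab j)"
definition AA :: "'a set" where "AA = {j \<in> V. ro j = -1}"
definition t :: "'a \<Rightarrow> int" where "t k = s k * r k"

lemma key: assumes "k \<in> V" "j \<in> V" "j \<noteq> k"
  shows "ro j * x k j = t k * alt (lab k) (lab j)"
proof -
  have "lab k \<noteq> lab j" using lab_inj assms unfolding inj_on_def by metis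
  then have pa: "par (lab j) * c' k j = alt (lab k) (lab j)"
    using lab_ord[OF assms(1,2)] assms(3) par_alt by auto
  have "ro j * x k j = r j * par (lab j) * (r k * r j * s k * c' k j)"
    unfolding ro_def using x_from_c'[OF assms(1,2)] assms(3) by auto
  also have "\<dots> = t k * (par (lab j) * c' k j)"
    unfolding t_def using ar_key[OF r_pm[OF assms(2)] r_pm[OF assms(1)] s_pm[OF assms(1)]] .
  finally show ?thesis using pa by simp
qed

lemma ro_A: "j \<in> V \<Longrightarrow> (if j \<in> AA then -1 else 1) = ro j"
  unfolding AA_def ro_def using r_pm[of j] par_pm[of "lab j"] by auto

lemma t_pm: "k \<in> V \<Longrightarrow> pm (t k)"
  unfolding t_def using r_pm[of k] s_pm[of k] by auto

lemma img: assumes kV: "k \<in> V"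
  shows "relabel lab (reorient AA (XX k)) = (if t k = 1 then Alt (lab k) else neg (Alt (lab k)))"
proof -
  have dk: "fst (XX k) \<inter> snd (XX k) = {}" using disjXX[OF kV] .
  have sk: "supp (XX k) \<subseteq> V" using XX[OF kV] by auto
  have sr: "supp (reorient AA (XX k)) \<subseteq> V" using sk supp_reorient by metis
  have d1: "fst (relabel lab (reorient AA (XX k))) \<inter> snd (relabel lab (reorient AA (XX k))) = {}"
    using disj_relabel[OF lab_inj sr disj_reorient[OF dk]] .
  have lk: "lab k \<in> {1..6}" using lab_img kV by auto
  have d2: "fst (if t k = 1 then Alt (lab k) else neg (Alt (lab k))) \<inter>
     snd (if t k = 1 then Alt (lab k) else neg (Alt (lab k))) = {}"
    using disj_Alt[of "lab k"] by (auto simp: fst_neg snd_neg)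
  have svR: "sv (if t k = 1 then Alt (lab k) else neg (Alt (lab k))) b = t k * sv (Alt (lab k)) b" for b
    using t_pm[OF kV] sv_neg[OF disj_Alt[of "lab k"]] by auto
  show ?thesis
  proof (rule sv_eq[OF d1 d2])
    fix b
    show "sv (relabel lab (reorient AA (XX k))) b = sv (if t k = 1 then Alt (lab k) else neg (Alt (lab k))) b"
    proof (cases "b \<in> lab ` V")
      case True
      then obtain j where jV: "j \<in> V" and bj: "b = lab j" by auto
      have "sv (relabel lab (reorient AA (XX k))) b = ro j * x k j"
        unfolding bj x_def using sv_relabel1[OF lab_inj sr jV] sv_reorient[OF dk] ro_A[OF jV] by simp
      also have "\<dots> = t k * sv (Alt (lab k)) b"
      proof (cases "j = k")
        case True
        then show ?thesis using x_zero[OF kV] sv_Alt[OF lk] bj by simp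
      next
        case False
        have "lab j \<in> {1..6}" "lab j \<noteq> lab k" using lab_img jV lab_inj kV False unfolding inj_on_def by auto
        then show ?thesis using key[OF kV jV False] sv_Alt[OF lk] bj by simp
      qed
      finally show ?thesis using svR by simp
    next
      case False
      then have "b \<notin> {1..6}" using lab_img by simp
      then have nb: "\<not> (b \<in> {1..6} \<and> b \<noteq> lab k)" by blast
      have "sv (Alt (lab k)) b = 0" using sv_Alt[OF lk, of b] unfolding if_not_P[OF nb] .
      then show ?thesis using sv_relabel0[OF sr False] svR[of b] by simp
    qed
  qed
qed

theorem iso: "om_iso (V, NC) (alternating_OM 6 4)"
  unfolding om_iso_def alternating_OM_def fst_conv snd_conv
proof (intro exI conjI)
  show "AA \<subseteq> V" unfolding AA_def by auto
  show "bij_betw lab V {1..6}" by (rule lab_bij)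
  show "alt_circuits 6 4 = (\<lambda>X. relabel lab (reorient AA X)) ` NC"
  proof
    show "alt_circuits 6 4 \<subseteq> (\<lambda>X. relabel lab (reorient AA X)) ` NC"
    proof
      fix Wc assume "Wc \<in> alt_circuits 6 4"
      then obtain a where a: "a \<in> {1..6}" "Wc = Alt a \<or> Wc = neg (Alt a)" unfolding alt_circ by auto
      then obtain k where kV: "k \<in> V" and ak: "a = lab k" using lab_img by (metis imageE)
      have XN: "XX k \<in> NC" "neg (XX k) \<in> NC" using XX[OF kV] negc by auto
      have i1: "relabel lab (reorient AA (neg (XX k))) = neg (relabel lab (reorient AA (XX k)))"
        by (simp add: reorient_neg relabel_neg)
      have nn: "neg (neg Y) = Y" for Y :: "nat signed" unfolding neg_def by simp
      show "Wc \<in> (\<lambda>X. relabel lab (reorient AA X)) ` NC"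
        using a(2) img[OF kV] i1 XN t_pm[OF kV] ak nn by (metis (no_types, lifting) image_eqI)
    qed
    show "(\<lambda>X. relabel lab (reorient AA X)) ` NC \<subseteq> alt_circuits 6 4"
    proof
      fix Wc assume "Wc \<in> (\<lambda>X. relabel lab (reorient AA X)) ` NC"
      then obtain Y where Y: "Y \<in> NC" "Wc = relabel lab (reorient AA Y)" by auto
      then obtain k where kV: "k \<in> V" and Yk: "Y = XX k \<or> Y = neg (XX k)" using NC_cases by blast
      have lk: "lab k \<in> {1..6}" using lab_img kV by auto
      have nn: "neg (neg Y) = Y" for Y :: "nat signed" unfolding neg_def by simp
      have "Wc = Alt (lab k) \<or> Wc = neg (Alt (lab k))"
        using Yk Y(2) img[OF kV] by (auto simp: reorient_neg relabel_neg nn split: if_splits)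
      then show "Wc \<in> alt_circuits 6 4" unfolding alt_circ using lk by auto
    qed
  qed
qed

end


definition Cont :: "'a set \<Rightarrow> 'a signed set \<Rightarrow> 'a signed set" where
  "Cont K C = (\<lambda>X. (fst X - K, snd X - K)) ` {X \<in> C. K \<subseteq> supp X}"

lemma supp_minus[simp]: "supp (fst X - K, snd X - K) = supp X - K"
  unfolding supp_def by auto

lemma supp_Cont:
  assumes U: "supp ` C = {I. I \<subseteq> E \<and> card I = d + 1}" and fE: "finite E" and KE: "K \<subseteq> E"
    and cK: "card K \<le> d"
  shows "supp ` Cont K C = {I. I \<subseteq> E - K \<and> card I = d + 1 - card K}"
proof
  have fK: "finite K" using fE KE finite_subset by blast
  show "supp ` Cont K C \<subseteq> {I. I \<subseteq> E - K \<and> card I = d + 1 - card K}"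
  proof
    fix I assume "I \<in> supp ` Cont K C"
    then obtain Y where Y: "Y \<in> Cont K C" "I = supp Y" by auto
    then obtain X where X0: "X \<in> C" "K \<subseteq> supp X" "Y = (fst X - K, snd X - K)"
      unfolding Cont_def by auto
    have X: "X \<in> C" "K \<subseteq> supp X" "I = supp X - K" using X0 Y(2) by auto
    have "supp X \<in> supp ` C" using X(1) by blast
    then have "supp X \<subseteq> E" "card (supp X) = d + 1" using U by auto
    then show "I \<in> {I. I \<subseteq> E - K \<and> card I = d + 1 - card K}"
      using X fK by (auto simp: card_Diff_subset)
  qed
  show "{I. I \<subseteq> E - K \<and> card I = d + 1 - card K} \<subseteq> supp ` Cont K C"
  proof
    fix I assume "I \<in> {I. I \<subseteq> E - K \<and> card I = d + 1 - card K}"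
    then have I: "I \<subseteq> E - K" "card I = d + 1 - card K" by auto
    have fI: "finite I" using I(1) fE finite_subset by blast
    have "card (I \<union> K) = d + 1" using I cK fI fK
      by (subst card_Un_disjoint) auto
    moreover have "I \<union> K \<subseteq> E" using I KE by auto
    ultimately have "I \<union> K \<in> supp ` C" using U by auto
    then obtain X where X: "X \<in> C" "supp X = I \<union> K" by auto
    then have "(fst X - K, snd X - K) \<in> Cont K C" unfolding Cont_def by auto
    moreover have "supp (fst X - K, snd X - K) = I" using X I(1) by auto
    ultimately show "I \<in> supp ` Cont K C" by (metis image_eqI)
  qed
qed

lemma Cont_insert:
  "(\<lambda>Y. (fst Y - {e}, snd Y - {e})) ` Cont K C =
   (\<lambda>X. (fst X - insert e K, snd X - insert e K)) ` {X \<in> C. K \<subseteq> supp X}"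
  unfolding Cont_def image_image by (intro image_cong refl) auto

lemma UC: "supp ` C = {I. I \<subseteq> E \<and> card I = d + 1} \<Longrightarrow> X \<in> C \<Longrightarrow> supp X \<subseteq> E \<and> card (supp X) = d + 1"
  by (metis (mono_tags, lifting) image_eqI mem_Collect_eq)

lemma contr_step:
  assumes U: "supp ` C = {I. I \<subseteq> E \<and> card I = d + 1}" and fE: "finite E" and KE: "K \<subseteq> E"
    and eK: "e \<in> E - K" and cK: "card K < d"
  shows "contraction (E - K, Cont K C) e = (E - insert e K, Cont (insert e K) C)"
proof -
  define D where "D = (\<lambda>Y. (fst Y - {e}, snd Y - {e})) ` Cont K C - {({},{})}"
  have fK: "finite K" using fE KE finite_subset by blast
  have SC: "supp ` Cont K C = {I. I \<subseteq> E - K \<and> card I = d + 1 - card K}"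
    using supp_Cont[OF U fE KE] cK by simp
  have ceK: "card (insert e K) = card K + 1" using eK fK by simp
  have DI: "(\<lambda>Y. (fst Y - {e}, snd Y - {e})) ` Cont K C =
     (\<lambda>X. (fst X - insert e K, snd X - insert e K)) ` {X \<in> C. K \<subseteq> supp X}"
    by (rule Cont_insert)
  have "{Z \<in> D. \<forall>W\<in>D. supp W \<subseteq> supp Z \<longrightarrow> supp W = supp Z} = Cont (insert e K) C"
  proof
    show "{Z \<in> D. \<forall>W\<in>D. supp W \<subseteq> supp Z \<longrightarrow> supp W = supp Z} \<subseteq> Cont (insert e K) C"
    proof
      fix Z assume "Z \<in> {Z \<in> D. \<forall>W\<in>D. supp W \<subseteq> supp Z \<longrightarrow> supp W = supp Z}"
      then have ZD: "Z \<in> D" and mn: "\<And>W. W \<in> D \<Longrightarrow> supp W \<subseteq> supp Z \<Longrightarrow> supp W = supp Z" by auto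
      obtain X where X: "X \<in> C" "K \<subseteq> supp X" "Z = (fst X - insert e K, snd X - insert e K)"
        using ZD unfolding D_def DI by auto
      have sX: "supp X \<subseteq> E" "card (supp X) = d + 1" using UC[OF U X(1)] by auto
      show "Z \<in> Cont (insert e K) C"
      proof (cases "e \<in> supp X")
        case True
        show ?thesis unfolding Cont_def by (rule image_eqI[of _ _ X]) (use X True in auto)
      next
        case False
        define S where "S = supp X - K"
        have sZ: "supp Z = S" using X(3) False unfolding S_def by auto
        have cS: "card S = d + 1 - card K" unfolding S_def using sX X(2) fK by (simp add: card_Diff_subset)
        then have "S \<noteq> {}" using cK by auto
        then obtain a where aS: "a \<in> S" by auto
        have fS: "finite S" unfolding S_def using sX fE by (meson finite_Diff finite_subset)
        have eS: "e \<notin> S" using False S_def by auto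
        define I where "I = insert e (S - {a})"
        have "I \<subseteq> E - K" using eK sX unfolding I_def S_def by auto
        moreover have "card I = d + 1 - card K"
          unfolding I_def using fS eS aS cS cK by (simp add: card_Diff_singleton)
        ultimately have "I \<in> supp ` Cont K C" using SC by auto
        then obtain Y where Y: "Y \<in> Cont K C" "supp Y = I" by auto
        define W where "W = (fst Y - {e}, snd Y - {e})"
        have sW: "supp W = S - {a}" unfolding W_def using Y(2) eS unfolding I_def by auto
        have "card (S - {a}) \<noteq> 0" using cS cK aS fS by (simp add: card_Diff_singleton)
        then have "S - {a} \<noteq> {}"
        proof (intro notI)
          assume "S - {a} = {}"
          then have "card (S - {a}) = 0" by (simp only: card.empty)
          then show False using \<open>card (S - {a}) \<noteq> 0\<close> by simp
        qed
        then have "W \<noteq> ({},{})"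
        proof (intro notI)
          assume ne: "S - {a} \<noteq> {}" and "W = ({},{})"
          then have "supp W = {}" by (simp add: supp_def)
          then show False using sW ne by simp
        qed
        moreover have "W \<in> (\<lambda>Y. (fst Y - {e}, snd Y - {e})) ` Cont K C"
          unfolding W_def by (rule image_eqI[OF _ Y(1)]) (rule refl)
        ultimately have "W \<in> D" unfolding D_def by blast
        moreover have "supp W \<subseteq> supp Z" using sW sZ by auto
        ultimately have "supp W = supp Z" by (rule mn)
        then have "S - {a} = S" using sW sZ by simp
        moreover have "a \<notin> S - {a}" by simp
        ultimately show ?thesis using aS by simp
      qed
    qed
    show "Cont (insert e K) C \<subseteq> {Z \<in> D. \<forall>W\<in>D. supp W \<subseteq> supp Z \<longrightarrow> supp W = supp Z}"
    proof
      fix Z assume "Z \<in> Cont (insert e K) C"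
      then obtain X where X: "X \<in> C" "insert e K \<subseteq> supp X" "Z = (fst X - insert e K, snd X - insert e K)"
        unfolding Cont_def by (auto elim!: imageE)
      have sX: "supp X \<subseteq> E" "card (supp X) = d + 1" using UC[OF U X(1)] by auto
      have sZ: "supp Z = supp X - insert e K" using X(3) by simp
      have cZ: "card (supp Z) = d - card K" unfolding sZ using X(2) fK ceK sX by (simp add: card_Diff_subset)
      have fZ: "finite (supp Z)" unfolding sZ using sX fE by (meson finite_Diff finite_subset)
      have "Z \<in> (\<lambda>X. (fst X - insert e K, snd X - insert e K)) ` {X \<in> C. K \<subseteq> supp X}"
        by (rule image_eqI[of _ _ X]) (use X in auto)
      moreover have "Z \<noteq> ({},{})" using cZ cK unfolding supp_def by auto
      ultimately have ZD: "Z \<in> D" unfolding D_def DI by auto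
      have "supp W = supp Z" if WD: "W \<in> D" and Ws: "supp W \<subseteq> supp Z" for W
      proof -
        obtain X' where X': "X' \<in> C" "K \<subseteq> supp X'" "W = (fst X' - insert e K, snd X' - insert e K)"
          using WD unfolding D_def DI by auto
        have sX': "supp X' \<subseteq> E" "card (supp X') = d + 1" using UC[OF U X'(1)] by auto
        show ?thesis
        proof (cases "e \<in> supp X'")
          case True
          have "card (supp W) = d - card K" using X'(2,3) True fK ceK sX' by (simp add: card_Diff_subset)
          then show ?thesis using Ws fZ cZ by (metis card_subset_eq)
        next
          case False
          have "supp W = supp X' - K" using X'(3) False by auto
          then have "card (supp W) = d + 1 - card K" using X'(2) fK sX' by (simp add: card_Diff_subset)
          moreover have "card (supp W) \<le> card (supp Z)" using Ws fZ card_mono by blast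
          ultimately show ?thesis using cZ cK by auto
        qed
      qed
      then have "\<forall>W\<in>D. supp W \<subseteq> supp Z \<longrightarrow> supp W = supp Z" by blast
      then show "Z \<in> {Z \<in> D. \<forall>W\<in>D. supp W \<subseteq> supp Z \<longrightarrow> supp W = supp Z}" using ZD by simp
    qed
  qed
  moreover have "E - K - {e} = E - insert e K" by auto
  ultimately show ?thesis unfolding contraction_def Let_def fst_conv snd_conv D_def[symmetric] by simp
qed

lemma contr_minor:
  assumes U: "supp ` C = {I. I \<subseteq> E \<and> card I = d + 1}" and fE: "finite E"
  shows "finite K \<Longrightarrow> K \<subseteq> E \<Longrightarrow> card K \<le> d \<Longrightarrow> minor (E - K, Cont K C) (E, C)"
proof (induction K rule: finite_induct)
  case empty
  have "Cont {} C = C" unfolding Cont_def by simp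
  then show ?case by (simp add: minor_refl)
next
  case (insert e K)
  have KE: "K \<subseteq> E" and eE: "e \<in> E" using insert.prems(1) by auto
  have cK: "card K < d" using insert.prems(2) insert.hyps by simp
  have m: "minor (E - K, Cont K C) (E, C)" using insert.IH[OF KE] cK by simp
  have "e \<in> fst (E - K, Cont K C)" using eE insert.hyps(2) by simp
  then have m2: "minor (contraction (E - K, Cont K C) e) (E, C)" by (rule minor_con[OF m])
  have "contraction (E - K, Cont K C) e = (E - insert e K, Cont (insert e K) C)"
    by (rule contr_step[OF U fE KE _ cK]) (use eE insert.hyps(2) in simp)
  then show ?case using m2 by (simp only:)
qed

lemma del_minor:
  assumes m: "minor (S, CC) M"
  shows "finite D \<Longrightarrow> D \<subseteq> S \<Longrightarrow> minor (S - D, {Y \<in> CC. supp Y \<inter> D = {}}) M"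
proof (induction D rule: finite_induct)
  case empty
  then show ?case using m by simp
next
  case (insert e D)
  then have m': "minor (S - D, {Y \<in> CC. supp Y \<inter> D = {}}) M" by auto
  have "e \<in> fst (S - D, {Y \<in> CC. supp Y \<inter> D = {}})" using insert by auto
  then have m2: "minor (deletion (S - D, {Y \<in> CC. supp Y \<inter> D = {}}) e) M" by (rule minor_del[OF m'])
  have e1: "S - D - {e} = S - insert e D" by auto
  have e2: "{X \<in> {Y \<in> CC. supp Y \<inter> D = {}}. e \<notin> supp X} = {Y \<in> CC. supp Y \<inter> insert e D = {}}" by auto
  have "deletion (S - D, {Y \<in> CC. supp Y \<inter> D = {}}) e = (S - insert e D, {Y \<in> CC. supp Y \<inter> insert e D = {}})"
    unfolding deletion_def fst_conv snd_conv e1 e2 by (rule refl)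
  then show ?case using m2 by (simp only:)
qed




lemma om_facts:
  assumes "oriented_matroid E C"
  shows "finite E"
    and "\<And>X. X \<in> C \<Longrightarrow> fst X \<inter> snd X = {}"
    and "\<And>X. X \<in> C \<Longrightarrow> neg X \<in> C"
    and "\<And>X Y. X \<in> C \<Longrightarrow> Y \<in> C \<Longrightarrow> supp X \<subseteq> supp Y \<Longrightarrow> X = Y \<or> X = neg Y"
    and "\<And>X Y e. X \<in> C \<Longrightarrow> Y \<in> C \<Longrightarrow> X \<noteq> neg Y \<Longrightarrow> e \<in> fst X \<inter> snd Y \<Longrightarrow>
        (\<exists>Z\<in>C. fst Z \<subseteq> (fst X \<union> fst Y) - {e} \<and> snd Z \<subseteq> (snd X \<union> snd Y) - {e})"
proof -
  note D = assms[unfolded oriented_matroid_def]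
  note d1 = D[THEN conjunct1]
  note d2 = D[THEN conjunct2, THEN conjunct1]
  note d4 = D[THEN conjunct2, THEN conjunct2, THEN conjunct2, THEN conjunct1]
  note d5 = D[THEN conjunct2, THEN conjunct2, THEN conjunct2, THEN conjunct2, THEN conjunct1]
  note d6 = D[THEN conjunct2, THEN conjunct2, THEN conjunct2, THEN conjunct2, THEN conjunct2]
  show "finite E" by (rule d1)
  show "\<And>X. X \<in> C \<Longrightarrow> fst X \<inter> snd X = {}" using d2 by simp
  show "\<And>X. X \<in> C \<Longrightarrow> neg X \<in> C" using d4 by simp
  show "\<And>X Y. X \<in> C \<Longrightarrow> Y \<in> C \<Longrightarrow> supp X \<subseteq> supp Y \<Longrightarrow> X = Y \<or> X = neg Y" using d5 by simp
  show "\<And>X Y e. X \<in> C \<Longrightarrow> Y \<in> C \<Longrightarrow> X \<noteq> neg Y \<Longrightarrow> e \<in> fst X \<inter> snd Y \<Longrightarrow>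
        (\<exists>Z\<in>C. fst Z \<subseteq> (fst X \<union> fst Y) - {e} \<and> snd Z \<subseteq> (snd X \<union> snd Y) - {e})"
  proof -
    fix X Y e assume "X \<in> C" "Y \<in> C" "X \<noteq> neg Y" "e \<in> fst X \<inter> snd Y"
    then show "\<exists>Z\<in>C. fst Z \<subseteq> (fst X \<union> fst Y) - {e} \<and> snd Z \<subseteq> (snd X \<union> snd Y) - {e}"
      using d6[rule_format, of X Y e] by simp
  qed
qed

theorem lemma11p3:
  fixes E :: "'a set" and C :: "'a signed set" and d :: nat
  assumes "uniform_OM E C d"
    and "d \<ge> 4"
    and "card E - d \<ge> 2"
  shows "\<exists>N. minor N (E, C) \<and> om_iso N (alternating_OM 6 4)"
proof -
  have OM: "oriented_matroid E C" and U: "supp ` C = {I. I \<subseteq> E \<and> card I = d + 1}"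
    using assms(1) unfolding uniform_OM_def by auto
  note omf = om_facts[OF OM]
  have fE: "finite E" by (rule omf(1))
  have cE: "card E \<ge> d + 2" using assms(3) by linarith
  have "d - 4 \<le> card E" using cE by linarith
  then obtain K where K: "K \<subseteq> E" "card K = d - 4" "finite K"
    by (rule obtain_subset_with_card_n)
  have "card (E - K) = card E - (d - 4)" using K fE by (simp add: card_Diff_subset)
  then have "6 \<le> card (E - K)" using cE assms(2) by linarith
  then obtain V where V: "V \<subseteq> E - K" "card V = 6" "finite V"
    using obtain_subset_with_card_n[of 6 "E - K"] by auto
  define Dl where "Dl = E - K - V"
  have m1: "minor (E - K, Cont K C) (E, C)"
    using contr_minor[OF U fE K(3) K(1)] K(2) by simp
  have m2: "minor (E - K - Dl, {Y \<in> Cont K C. supp Y \<inter> Dl = {}}) (E, C)"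
    using del_minor[OF m1] fE unfolding Dl_def by auto
  have EKD: "E - K - Dl = V" unfolding Dl_def using V(1) by auto
  define NC where "NC = {Y \<in> Cont K C. supp Y \<inter> Dl = {}}"
  have VK: "V \<inter> K = {}" "V \<subseteq> E" using V(1) by auto
  have memNC: "Y \<in> NC \<longleftrightarrow> (\<exists>X\<in>C. K \<subseteq> supp X \<and> supp X \<subseteq> V \<union> K \<and> Y = (fst X - K, snd X - K))" for Y
  proof
    assume "Y \<in> NC"
    then have Y1: "Y \<in> Cont K C" "supp Y \<inter> Dl = {}" unfolding NC_def by auto
    from Y1(1) obtain X where X0: "X \<in> C" "K \<subseteq> supp X" "Y = (fst X - K, snd X - K)"
      unfolding Cont_def by auto
    note X = X0 Y1(2)
    have "supp X \<subseteq> E" using UC[OF U X(1)] by auto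
    then have "supp X \<subseteq> V \<union> K" using X(3,4) unfolding Dl_def by auto
    then show "\<exists>X\<in>C. K \<subseteq> supp X \<and> supp X \<subseteq> V \<union> K \<and> Y = (fst X - K, snd X - K)" using X by auto
  next
    assume "\<exists>X\<in>C. K \<subseteq> supp X \<and> supp X \<subseteq> V \<union> K \<and> Y = (fst X - K, snd X - K)"
    then obtain X where X: "X \<in> C" "K \<subseteq> supp X" "supp X \<subseteq> V \<union> K" "Y = (fst X - K, snd X - K)" by auto
    have "supp Y \<inter> Dl = {}" using X(3,4) unfolding Dl_def by auto
    moreover have "Y \<in> Cont K C" using X unfolding Cont_def by auto
    ultimately show "Y \<in> NC" unfolding NC_def by auto
  qed
  have cK5: "d + 1 - card K = 5" using K(2) assms(2) by simp
  have sixVN: "six V NC"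
  proof (unfold six_def, intro conjI)
    show "finite V" by (rule V(3))
    show "card V = 6" by (rule V(2))
    show "\<forall>Y\<in>NC. fst Y \<inter> snd Y = {}"
    proof
      fix Y assume "Y \<in> NC"
      then obtain X where X: "X \<in> C" "Y = (fst X - K, snd X - K)" using memNC[of Y] by auto
      then show "fst Y \<inter> snd Y = {}" using omf(2)[OF X(1)] by auto
    qed
    show "\<forall>Y\<in>NC. supp Y \<subseteq> V \<and> card (supp Y) = 5"
    proof
      fix Y assume "Y \<in> NC"
      then obtain X where X: "X \<in> C" "K \<subseteq> supp X" "supp X \<subseteq> V \<union> K" "Y = (fst X - K, snd X - K)"
        using memNC[of Y] by auto
      have "card (supp X) = d + 1" using UC[OF U X(1)] by auto
      then have "card (supp X - K) = 5" using X(2) K(3) cK5 by (simp add: card_Diff_subset)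
      then show "supp Y \<subseteq> V \<and> card (supp Y) = 5" using X(3,4) by auto
    qed
    show "\<forall>S. S \<subseteq> V \<and> card S = 5 \<longrightarrow> (\<exists>Y\<in>NC. supp Y = S)"
    proof (intro allI impI)
      fix S assume S: "S \<subseteq> V \<and> card S = 5"
      have fS: "finite S" using S V(3) finite_subset by blast
      have "card (S \<union> K) = d + 1" using S fS K VK assms(2) by (subst card_Un_disjoint) auto
      moreover have "S \<union> K \<subseteq> E" using S VK K by auto
      ultimately have "S \<union> K \<in> supp ` C" using U by auto
      then obtain X where X: "X \<in> C" "supp X = S \<union> K" by auto
      then have "(fst X - K, snd X - K) \<in> NC" using memNC[of "(fst X - K, snd X - K)"] S by auto
      moreover have "supp (fst X - K, snd X - K) = S" using X S VK by auto
      ultimately show "\<exists>Y\<in>NC. supp Y = S" by blast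
    qed
    show "\<forall>Y\<in>NC. \<forall>Y'\<in>NC. supp Y = supp Y' \<longrightarrow> Y' = Y \<or> Y' = neg Y"
    proof (intro ballI impI)
      fix Y Y' assume YN: "Y \<in> NC" and Y'N: "Y' \<in> NC" and eq: "supp Y = supp Y'"
      obtain X where X: "X \<in> C" "K \<subseteq> supp X" "Y = (fst X - K, snd X - K)"
        using memNC[of Y] YN by auto
      obtain X' where X': "X' \<in> C" "K \<subseteq> supp X'" "Y' = (fst X' - K, snd X' - K)"
        using memNC[of Y'] Y'N by auto
      have "supp X' = supp X"
      proof -
        have sY: "supp Y = supp X - K" "supp Y' = supp X' - K" using X(3) X'(3) by simp_all
        have "supp X = supp Y \<union> K" using sY(1) X(2) by auto
        moreover have "supp X' = supp Y' \<union> K" using sY(2) X'(2) by auto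
        ultimately show ?thesis using eq by simp
      qed
      then have "X' = X \<or> X' = neg X" using omf(4)[OF X'(1) X(1)] by simp
      then show "Y' = Y \<or> Y' = neg Y" using X(3) X'(3) by (auto simp: neg_def)
    qed
    show "\<forall>Y\<in>NC. neg Y \<in> NC"
    proof
      fix Y assume "Y \<in> NC"
      then obtain X where X: "X \<in> C" "K \<subseteq> supp X" "supp X \<subseteq> V \<union> K" "Y = (fst X - K, snd X - K)"
        using memNC[of Y] by auto
      have "neg X \<in> C" using omf(3)[OF X(1)] .
      moreover have "supp (neg X) = supp X" unfolding supp_def neg_def by auto
      moreover have "neg Y = (fst (neg X) - K, snd (neg X) - K)" using X(4) unfolding neg_def by simp
      ultimately show "neg Y \<in> NC" using memNC[of "neg Y"] X by auto
    qed
    show "\<forall>Y\<in>NC. \<forall>Y'\<in>NC. \<forall>e. supp Y \<noteq> supp Y' \<and> e \<in> fst Y \<inter> snd Y' \<longrightarrow>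
     (\<exists>Z\<in>NC. fst Z \<subseteq> fst Y \<union> fst Y' - {e} \<and> snd Z \<subseteq> snd Y \<union> snd Y' - {e})"
    proof (intro ballI allI impI)
      fix Y Y' e assume YN: "Y \<in> NC" and Y'N: "Y' \<in> NC" and h: "supp Y \<noteq> supp Y' \<and> e \<in> fst Y \<inter> snd Y'"
      obtain X where X: "X \<in> C" "K \<subseteq> supp X" "supp X \<subseteq> V \<union> K" "Y = (fst X - K, snd X - K)"
        using memNC[of Y] YN by auto
      obtain X' where X': "X' \<in> C" "K \<subseteq> supp X'" "supp X' \<subseteq> V \<union> K" "Y' = (fst X' - K, snd X' - K)"
        using memNC[of Y'] Y'N by auto
      have eX: "e \<in> fst X \<inter> snd X'" "e \<notin> K" using h X(4) X'(4) by auto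
      have sY: "supp Y = supp X - K" "supp Y' = supp X' - K" using X(4) X'(4) by auto
      have nn: "X \<noteq> neg X'"
      proof
        assume "X = neg X'"
        then have "supp X = supp X'" unfolding supp_def neg_def by auto
        then show False using h sY by simp
      qed
      obtain Z0 where Z0: "Z0 \<in> C" "fst Z0 \<subseteq> (fst X \<union> fst X') - {e}" "snd Z0 \<subseteq> (snd X \<union> snd X') - {e}"
        using omf(5)[OF X(1) X'(1) nn eX(1)] by blast
      have c5: "card (supp X - K) = 5" "card (supp X' - K) = 5"
        using UC[OF U X(1)] UC[OF U X'(1)] X(2) X'(2) K(3) cK5 by (simp_all add: card_Diff_subset)
      have sub: "supp X - K \<subseteq> V" "supp X' - K \<subseteq> V" using X(3) X'(3) by auto
      have un: "(supp X - K) \<union> (supp X' - K) = V"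
      proof -
        have f1: "finite ((supp X - K) \<union> (supp X' - K))" using sub V(3) finite_subset by blast
        have "card ((supp X - K) \<union> (supp X' - K)) \<noteq> 5"
        proof
          assume c: "card ((supp X - K) \<union> (supp X' - K)) = 5"
          have "supp X - K = (supp X - K) \<union> (supp X' - K)"
            using card_subset_eq[OF f1 _ ] c c5(1) by (metis Un_upper1)
          moreover have "supp X' - K = (supp X - K) \<union> (supp X' - K)"
            using card_subset_eq[OF f1 _ ] c c5(2) by (metis Un_upper2)
          ultimately show False using h sY by simp
        qed
        moreover have "card ((supp X - K) \<union> (supp X' - K)) \<ge> 5" using f1 c5(1) card_mono
          by (metis Un_upper1)
        moreover have "card ((supp X - K) \<union> (supp X' - K)) \<le> 6" using sub V card_mono
          by (metis Un_least)
        ultimately have "card ((supp X - K) \<union> (supp X' - K)) = card V" using V(2) by linarith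
        then show ?thesis using card_subset_eq[OF V(3)] sub by (metis Un_least)
      qed
      then have uXX: "supp X \<union> supp X' = V \<union> K" using X(2,3) X'(2,3) by auto
      have "supp Z0 \<subseteq> (supp X \<union> supp X') - {e}" using Z0(2,3) unfolding supp_def by auto
      then have supZ: "supp Z0 \<subseteq> (V \<union> K) - {e}" unfolding uXX .
      have "e \<in> supp X - K" using eX unfolding supp_def by auto
      then have eV: "e \<in> V" using sub(1) by blast
      have fVK: "finite ((V \<union> K) - {e})" using V(3) K(3) by simp
      have "card ((V \<union> K) - {e}) = d + 1"
        using eV VK(1) V K(2,3) assms(2) by (simp add: card_Un_disjoint)
      moreover have "card (supp Z0) = d + 1" using UC[OF U Z0(1)] by auto
      ultimately have sZ0: "supp Z0 = (V \<union> K) - {e}" using card_subset_eq[OF fVK supZ] by simp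
      have "(fst Z0 - K, snd Z0 - K) \<in> NC" using memNC[of "(fst Z0 - K, snd Z0 - K)"] Z0(1) sZ0 eX(2) by auto
      moreover have "fst (fst Z0 - K, snd Z0 - K) \<subseteq> fst Y \<union> fst Y' - {e}" using Z0(2) X(4) X'(4) by auto
      moreover have "snd (fst Z0 - K, snd Z0 - K) \<subseteq> snd Y \<union> snd Y' - {e}" using Z0(3) X(4) X'(4) by auto
      ultimately show "\<exists>Z\<in>NC. fst Z \<subseteq> fst Y \<union> fst Y' - {e} \<and> snd Z \<subseteq> snd Y \<union> snd Y' - {e}" by blast
    qed
  qed
  have "om_iso (V, NC) (alternating_OM 6 4)" using six.iso[OF sixVN] .
  moreover have "minor (V, NC) (E, C)" using m2 EKD unfolding NC_def by simp
  ultimately show ?thesis by blast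
qed

end
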